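(* Let $X,X_1,X_2,\dots$ be i.i.d. positive random variables with $\mathbb{E}X=1$, let $p\ge2$ be an integer, and suppose $\mathbb{E}X^p<\infty$. Let $1\le r\le p$ and let $\gamma=(\gamma_1,\dots,\gamma_r)$ be a tuple of positive integers with $\gamma_1+\dots+\gamma_r=p$. For $n>r$ put $S_r=X_1+\dots+X_r$, $S_{n,r}=X_{r+1}+\dots+X_n$ and $$\xi_n(\gamma)=\frac{X_1^{2\gamma_1}\cdots X_r^{2\gamma_r}}{\left(\frac1nS_r+\frac1nS_{n,r}\right)^p}.$$ Then, as $n\to\infty$, $$\mathbb{E}\xi_n(\gamma)\le 4^p\,\mathbb{E}\frac{X_1^{2\gamma_1}\cdots X_r^{2\gamma_r}}{\left(\frac1nS_r+1\right)^p}+o(1).$$ *)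

theory Defs
  imports "HOL-Probability.Probability"
begin

end

theory Submission
  imports Defs
begin


lemma pow_le_one_plus:
  fixes x :: real assumes "x > 0" "k \<le> p" shows "x ^ k \<le> 1 + x ^ p"
proof (cases "x \<le> 1")
  case True
  then have "x ^ k \<le> 1" using assms by (simp add: power_le_one)
  moreover have "0 \<le> x ^ p" using assms by simp
  ultimately show ?thesis by linarith
next
  case False
  then have "x ^ k \<le> x ^ p" using assms by (intro power_increasing) auto
  moreover have "0 \<le> (1::real)" by simp
  ultimately show ?thesis by linarith
qed

lemma exp_neg_le_quad:
  fixes u :: real assumes "u \<ge> 0" shows "exp (-u) \<le> 1 - u + u^2/2"
proof -
  have e: "1 + u + u^2/2 \<le> exp u" using exp_lower_Taylor_quadratic[OF assms] .
  have pos: "0 < 1 + u + u^2/2" using assms by (simp add: add_pos_nonneg)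
  have "(1 + u + u^2/2) * (1 - u + u^2/2) = 1 + u^4/4" by (simp add: algebra_simps power2_eq_square power4_eq_xxxx)
  also have "\<dots> \<ge> 1" by simp
  finally have h: "1 \<le> (1 + u + u^2/2) * (1 - u + u^2/2)" .
  have "exp (-u) = 1 / exp u" by (simp add: exp_minus field_simps)
  also have "\<dots> \<le> 1 / (1 + u + u^2/2)" using e pos by (intro divide_left_mono) auto
  also have "\<dots> \<le> 1 - u + u^2/2" using h pos by (simp add: divide_le_eq mult.commute)
  finally show ?thesis .
qed

lemma poly_exp_lim:
  fixes a :: real assumes "a > 0"
  shows "(\<lambda>n. real n ^ p * exp (- a * real n)) \<longlonglongrightarrow> 0"
proof -
  have f: "filterlim (\<lambda>n. a * real n) at_top sequentially"
    using assms by (intro filterlim_tendsto_pos_mult_at_top[OF tendsto_const] filterlim_real_sequentially) auto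
  have "((\<lambda>n. (a * real n) ^ p / exp (a * real n)) \<longlongrightarrow> 0) sequentially"
    using filterlim_compose[OF tendsto_power_div_exp_0 f] by simp
  then have "((\<lambda>n. (1 / a ^ p) * ((a * real n) ^ p / exp (a * real n))) \<longlongrightarrow> (1/a^p) * 0) sequentially"
    by (intro tendsto_mult tendsto_const)
  moreover have "(1 / a ^ p) * ((a * real n) ^ p / exp (a * real n)) = real n ^ p * exp (- a * real n)" for n
    using assms by (simp add: power_mult_distrib exp_minus field_simps)
  ultimately show ?thesis by simp
qed

lemma aux_lin: "1/2 \<le> b \<Longrightarrow> 0 < a \<Longrightarrow> (a + 1) / 2 \<le> a + (b::real)" by (simp add: field_simps)

lemma pointwise:
  fixes x :: "nat \<Rightarrow> real" and \<gamma> :: "nat \<Rightarrow> nat"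
  assumes pos: "\<And>i. x i > 0" and nr: "r < n" and r1: "1 \<le> r"
    and gs: "(\<Sum>i=1..r. \<gamma> i) = p" and t: "t > 0"
  shows "(\<Prod>i=1..r. x i ^ (2 * \<gamma> i)) /
            ((\<Sum>i=1..r. x i) / real n + (\<Sum>i=r+1..n. x i) / real n) ^ p
       \<le> 2 ^ p * ((\<Prod>i=1..r. x i ^ (2 * \<gamma> i)) / ((\<Sum>i=1..r. x i) / real n + 1) ^ p)
         + real n ^ p * exp (t * real n / 2) * ((\<Prod>i=1..r. x i ^ \<gamma> i) * (\<Prod>j=r+1..n. exp (- t * x j)))"
proof -
  define P where "P = (\<Prod>i=1..r. x i ^ (2 * \<gamma> i))"
  define Q where "Q = (\<Prod>i=1..r. x i ^ \<gamma> i)"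
  define Sr where "Sr = (\<Sum>i=1..r. x i)"
  define Sp where "Sp = (\<Sum>i=r+1..n. x i)"
  have n0: "real n > 0" using nr by simp
  have P0: "P \<ge> 0" unfolding P_def using pos by (intro prod_nonneg) (auto intro: less_imp_le)
  have Q0: "Q \<ge> 0" unfolding Q_def using pos by (intro prod_nonneg) (auto intro: less_imp_le)
  have Sr0: "Sr > 0" unfolding Sr_def using pos r1 by (intro sum_pos) auto
  have Sp0: "Sp \<ge> 0" unfolding Sp_def using pos by (intro sum_nonneg) (auto intro: less_imp_le)
  have E: "(\<Prod>j=r+1..n. exp (- t * x j)) = exp (- t * Sp)"
    unfolding Sp_def by (simp add: exp_sum sum_distrib_left)
  have R0: "0 \<le> real n ^ p * exp (t * real n / 2) * (Q * exp (- t * Sp))" using Q0 by simp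
  have A0: "0 \<le> 2 ^ p * (P / (Sr / real n + 1) ^ p)" using P0 Sr0 n0 by simp
  have "P / (Sr / real n + Sp / real n) ^ p \<le> 2 ^ p * (P / (Sr / real n + 1) ^ p)
        + real n ^ p * exp (t * real n / 2) * (Q * exp (- t * Sp))"
  proof (cases "Sp / real n \<ge> 1/2")
    case True
    have "0 < Sr / real n" using Sr0 n0 by simp
    then have d0: "0 < (Sr / real n + 1) / 2" by simp
    have le: "(Sr / real n + 1) / 2 \<le> Sr / real n + Sp / real n" using True \<open>0 < Sr / real n\<close>
      by (metis (no_types) aux_lin)
    then have pos2: "0 < Sr / real n + Sp / real n" using d0 by linarith
    have "((Sr / real n + 1) / 2) ^ p \<le> (Sr / real n + Sp / real n) ^ p"
      by (rule power_mono[OF le less_imp_le[OF d0]])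
    then have "P / (Sr / real n + Sp / real n) ^ p \<le> P / ((Sr / real n + 1) / 2) ^ p"
      using P0 d0 pos2 by (intro divide_left_mono mult_pos_pos) auto
    also have "\<dots> = 2 ^ p * (P / (Sr / real n + 1) ^ p)" by (simp add: power_divide)
    finally show ?thesis using R0 by linarith
  next
    case False
    have "0 < Sr / real n" using Sr0 n0 by simp
    have "0 \<le> Sp / real n" using Sp0 n0 by simp
    have "Sp < real n / 2" using False n0 by (simp add: field_simps)
    then have "1 \<le> exp (t * real n / 2) * exp (- t * Sp)"
      using t by (simp add: exp_add[symmetric])
    then have "Q * 1 \<le> Q * (exp (t * real n / 2) * exp (- t * Sp))"
      by (rule mult_left_mono[OF _ Q0])
    then have ge: "Q \<le> exp (t * real n / 2) * (Q * exp (- t * Sp))"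
      by (simp add: ac_simps)
    have Q'le: "(\<Prod>i=1..r. x i ^ \<gamma> i) \<le> (\<Prod>i=1..r. Sr ^ \<gamma> i)"
    proof (intro prod_mono conjI)
      fix i assume i: "i \<in> {1..r}"
      show "0 \<le> x i ^ \<gamma> i" using pos[of i] by simp
      have "x i \<le> Sr" unfolding Sr_def using i pos by (intro member_le_sum) (auto intro: less_imp_le)
      then show "x i ^ \<gamma> i \<le> Sr ^ \<gamma> i" using pos[of i] by (intro power_mono) auto
    qed
    have PQ: "P = Q * (\<Prod>i=1..r. x i ^ \<gamma> i)"
      unfolding P_def Q_def by (simp add: prod.distrib[symmetric] mult_2 power_add)
    have "P \<le> Q * Sr ^ p"
      unfolding PQ gs[symmetric] power_sum using Q'le Q0 by (intro mult_left_mono) auto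
    have "P / (Sr / real n + Sp / real n) ^ p \<le> P / (Sr / real n) ^ p"
      using P0 \<open>0 < Sr / real n\<close> \<open>0 \<le> Sp / real n\<close>
      by (intro divide_left_mono power_mono mult_pos_pos zero_less_power) auto
    also have "\<dots> = real n ^ p * (P / Sr ^ p)" by (simp add: power_divide)
    also have "\<dots> \<le> real n ^ p * Q"
      using \<open>P \<le> Q * Sr ^ p\<close> Sr0 by (intro mult_left_mono) (auto simp: divide_le_eq)
    also have "\<dots> \<le> real n ^ p * (exp (t * real n / 2) * (Q * exp (- t * Sp)))"
      using ge by (intro mult_left_mono) auto
    finally show ?thesis using A0 by (simp add: mult.assoc)
  qed
  then show ?thesis unfolding P_def[symmetric] Q_def[symmetric] Sr_def[symmetric] Sp_def[symmetric] E .
qed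


lemma aux_ac1: "(N::real) * Z * (Bp * E) = N * Bp * (E * Z)" by (simp add: ac_simps)
lemma aux_ac2: "(N::real) * Bp * (E1 * E2) = Bp * E1 * (N * E2)" by (simp add: ac_simps)

theorem lemma4:
  fixes M :: "'a measure" and X :: "nat \<Rightarrow> 'a \<Rightarrow> real"
    and p r :: nat and \<gamma> :: "nat \<Rightarrow> nat"
  assumes "prob_space M"
    and meas: "\<And>i. X i \<in> borel_measurable M"
    and indep: "prob_space.indep_vars M (\<lambda>_. borel) X UNIV"
    and ident: "\<And>i. distr M borel (X i) = distr M borel (X 0)"
    and pos: "\<And>i \<omega>. \<omega> \<in> space M \<Longrightarrow> X i \<omega> > 0"
    and int1: "integrable M (X 0)" and mean: "prob_space.expectation M (X 0) = 1"
    and p2: "p \<ge> 2"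
    and intp: "integrable M (\<lambda>\<omega>. X 0 \<omega> ^ p)"
    and r: "1 \<le> r" "r \<le> p"
    and \<gamma>pos: "\<And>i. i \<in> {1..r} \<Longrightarrow> \<gamma> i > 0"
    and \<gamma>sum: "(\<Sum>i=1..r. \<gamma> i) = p"
  shows "\<exists>e :: nat \<Rightarrow> real. e \<longlonglongrightarrow> 0 \<and>
    (\<forall>\<^sub>F n in sequentially.
      (\<integral>\<^sup>+ \<omega>. ennreal ((\<Prod>i=1..r. X i \<omega> ^ (2 * \<gamma> i)) /
            ((\<Sum>i=1..r. X i \<omega>) / real n + (\<Sum>i=r+1..n. X i \<omega>) / real n) ^ p) \<partial>M)
      \<le> 4 ^ p * (\<integral>\<^sup>+ \<omega>. ennreal ((\<Prod>i=1..r. X i \<omega> ^ (2 * \<gamma> i)) /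
            ((\<Sum>i=1..r. X i \<omega>) / real n + 1) ^ p) \<partial>M) + ennreal (e n))"
proof -
  interpret prob_space M by fact
  note meas[measurable]
  define m2 where "m2 = (\<integral>\<omega>. X 0 \<omega> ^ 2 \<partial>M)"
  define B where "B = 1 + (\<integral>\<omega>. X 0 \<omega> ^ p \<partial>M)"
  define t where "t = 1 / (2 * (m2 + 1))"
  have m20: "m2 \<ge> 0" unfolding m2_def by simp
  have t0: "t > 0" unfolding t_def using m20 by simp
  have tm2: "t * m2 \<le> 1/2" unfolding t_def using m20 by (simp add: field_simps)
  have B0: "B \<ge> 0" unfolding B_def
    using integral_nonneg_AE[of "\<lambda>\<omega>. X 0 \<omega> ^ p" M] pos by (simp add: less_imp_le)
  have intk: "integrable M (\<lambda>\<omega>. X 0 \<omega> ^ k)" if "k \<le> p" for k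
  proof (rule Bochner_Integration.integrable_bound[where f="\<lambda>\<omega>. 1 + X 0 \<omega> ^ p"])
    show "integrable M (\<lambda>\<omega>. 1 + X 0 \<omega> ^ p)" using intp by simp
    show "(\<lambda>\<omega>. X 0 \<omega> ^ k) \<in> borel_measurable M" by measurable
    show "AE \<omega> in M. norm (X 0 \<omega> ^ k) \<le> norm (1 + X 0 \<omega> ^ p)"
    proof (rule AE_I2)
      fix \<omega> assume "\<omega> \<in> space M"
      then have x: "X 0 \<omega> > 0" by (rule pos)
      then show "norm (X 0 \<omega> ^ k) \<le> norm (1 + X 0 \<omega> ^ p)"
        using pow_le_one_plus[OF x that] by simp
    qed
  qed
  have samedist: "(\<integral>\<^sup>+\<omega>. ennreal (g (X i \<omega>)) \<partial>M) = (\<integral>\<^sup>+\<omega>. ennreal (g (X 0 \<omega>)) \<partial>M)"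
    if g[measurable]: "g \<in> borel_measurable borel" for g i
  proof -
    have "(\<integral>\<^sup>+\<omega>. ennreal (g (X i \<omega>)) \<partial>M) = (\<integral>\<^sup>+x. ennreal (g x) \<partial>distr M borel (X i))"
      by (subst nn_integral_distr) auto
    also have "\<dots> = (\<integral>\<^sup>+x. ennreal (g x) \<partial>distr M borel (X 0))" by (subst ident[of i]) (rule refl)
    also have "\<dots> = (\<integral>\<^sup>+\<omega>. ennreal (g (X 0 \<omega>)) \<partial>M)"
      by (subst nn_integral_distr) auto
    finally show ?thesis .
  qed
  have mom: "(\<integral>\<^sup>+\<omega>. ennreal (X 0 \<omega> ^ k) \<partial>M) \<le> ennreal B" if "k \<le> p" for k
  proof -
    have "(\<integral>\<^sup>+\<omega>. ennreal (X 0 \<omega> ^ k) \<partial>M) \<le> (\<integral>\<^sup>+\<omega>. ennreal (1 + X 0 \<omega> ^ p) \<partial>M)"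
    proof (intro nn_integral_mono ennreal_leI)
      fix \<omega> assume "\<omega> \<in> space M"
      then have x: "X 0 \<omega> > 0" by (rule pos)
      show "X 0 \<omega> ^ k \<le> 1 + X 0 \<omega> ^ p" using pow_le_one_plus[OF x that] .
    qed
    also have "\<dots> = ennreal (\<integral>\<omega>. 1 + X 0 \<omega> ^ p \<partial>M)"
      using intp pos by (intro nn_integral_eq_integral AE_I2) (auto simp: less_imp_le add_nonneg_nonneg)
    also have "(\<integral>\<omega>. 1 + X 0 \<omega> ^ p \<partial>M) = B"
      unfolding B_def using intp by (simp add: prob_space)
    finally show ?thesis .
  qed
  have phi: "(\<integral>\<^sup>+\<omega>. ennreal (exp (- t * X 0 \<omega>)) \<partial>M) \<le> ennreal (exp (- (3 * t / 4)))"
  proof -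
    have "(\<integral>\<^sup>+\<omega>. ennreal (exp (- t * X 0 \<omega>)) \<partial>M)
        \<le> (\<integral>\<^sup>+\<omega>. ennreal (1 - t * X 0 \<omega> + (t^2/2) * X 0 \<omega> ^ 2) \<partial>M)"
    proof (intro nn_integral_mono ennreal_leI)
      fix \<omega> assume "\<omega> \<in> space M"
      then have x: "X 0 \<omega> > 0" by (rule pos)
      have "exp (- (t * X 0 \<omega>)) \<le> 1 - t * X 0 \<omega> + (t * X 0 \<omega>)^2/2"
        using t0 x by (intro exp_neg_le_quad) simp
      then show "exp (- t * X 0 \<omega>) \<le> 1 - t * X 0 \<omega> + (t^2/2) * X 0 \<omega> ^ 2"
        by (simp add: power_mult_distrib)
    qed
    also have "\<dots> = ennreal (\<integral>\<omega>. 1 - t * X 0 \<omega> + (t^2/2) * X 0 \<omega> ^ 2 \<partial>M)"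
    proof (intro nn_integral_eq_integral AE_I2)
      show "integrable M (\<lambda>\<omega>. 1 - t * X 0 \<omega> + (t^2/2) * X 0 \<omega> ^ 2)"
        using int1 intk[of 2] p2 by simp
      fix \<omega>
      have "0 \<le> ((t * X 0 \<omega> - 1)^2 + 1) / 2" by simp
      also have "\<dots> = 1 - t * X 0 \<omega> + (t^2/2) * X 0 \<omega> ^ 2"
        by (simp add: power2_eq_square field_simps)
      finally show "0 \<le> 1 - t * X 0 \<omega> + (t^2/2) * X 0 \<omega> ^ 2" .
    qed
    also have "(\<integral>\<omega>. 1 - t * X 0 \<omega> + (t^2/2) * X 0 \<omega> ^ 2 \<partial>M) = 1 - t + (t^2/2) * m2"
      using int1 intk[of 2] p2 mean unfolding m2_def by (simp add: prob_space)
    also have "\<dots> \<le> 1 + (- (3 * t / 4))"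
    proof -
      have "(t^2/2) * m2 = t * (t * m2) / 2" by (simp add: power2_eq_square)
      also have "\<dots> \<le> t * (1/2) / 2" using tm2 t0 by (intro divide_right_mono mult_left_mono) auto
      finally have "(t^2/2) * m2 \<le> t / 4" by simp
      then show ?thesis by linarith
    qed
    also have "\<dots> \<le> exp (- (3 * t / 4))" by (rule exp_ge_add_one_self)
    finally show ?thesis by (simp add: ennreal_leI)
  qed
  define e where "e n = B ^ r * exp (3 * t * r / 4) * (real n ^ p * exp (- (t / 4) * real n))" for n
  have elim: "e \<longlonglongrightarrow> 0"
  proof -
    have "(\<lambda>n. B ^ r * exp (3 * t * r / 4) * (real n ^ p * exp (- (t / 4) * real n))) \<longlonglongrightarrow> B ^ r * exp (3 * t * r / 4) * 0"
      using t0 by (intro tendsto_mult tendsto_const poly_exp_lim) simp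
    then show ?thesis unfolding e_def by simp
  qed
  show ?thesis
  proof (intro exI[of _ e] conjI elim eventually_sequentiallyI[of "Suc r"])
    fix n assume "Suc r \<le> n"
    then have nr: "r < n" by simp
    define Y where "Y i \<omega> = (if i \<le> r then X i \<omega> ^ \<gamma> i else exp (- t * X i \<omega>))" for i \<omega>
    define c where "c = real n ^ p * exp (t * real n / 2)"
    define L where "L \<omega> = (\<Prod>i=1..r. X i \<omega> ^ (2 * \<gamma> i)) /
            ((\<Sum>i=1..r. X i \<omega>) / real n + (\<Sum>i=r+1..n. X i \<omega>) / real n) ^ p" for \<omega>
    define A where "A \<omega> = (\<Prod>i=1..r. X i \<omega> ^ (2 * \<gamma> i)) /
            ((\<Sum>i=1..r. X i \<omega>) / real n + 1) ^ p" for \<omega>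
    have c0: "c \<ge> 0" unfolding c_def by simp
    have Ymeas[measurable]: "(\<lambda>\<omega>. Y i \<omega>) \<in> borel_measurable M" for i
      unfolding Y_def by measurable
    have Lmeas[measurable]: "L \<in> borel_measurable M" unfolding L_def by measurable
    have Ameas[measurable]: "A \<in> borel_measurable M" unfolding A_def by measurable
    have split: "{1..n} = {1..r} \<union> {r+1..n}" using nr by auto
    have pw: "ennreal (L \<omega>) \<le> 2 ^ p * ennreal (A \<omega>) + ennreal c * (\<Prod>i\<in>{1..n}. ennreal (Y i \<omega>))"
      if \<omega>: "\<omega> \<in> space M" for \<omega>
    proof -
      have xpos: "\<And>i. X i \<omega> > 0" using pos[OF \<omega>] .
      have Y0: "\<And>i. 0 \<le> Y i \<omega>" unfolding Y_def using xpos by (simp add: less_imp_le)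
      have A0: "0 \<le> A \<omega>" unfolding A_def using xpos
        by (intro divide_nonneg_nonneg prod_nonneg zero_le_power add_nonneg_nonneg sum_nonneg) (auto simp: less_imp_le)
      have "L \<omega> \<le> 2 ^ p * A \<omega> + c * ((\<Prod>i=1..r. X i \<omega> ^ \<gamma> i) * (\<Prod>j=r+1..n. exp (- t * X j \<omega>)))"
        unfolding L_def A_def c_def using pointwise[of "\<lambda>i. X i \<omega>", OF xpos nr r(1) \<gamma>sum t0] by simp
      also have "(\<Prod>i=1..r. X i \<omega> ^ \<gamma> i) * (\<Prod>j=r+1..n. exp (- t * X j \<omega>)) = (\<Prod>i\<in>{1..n}. Y i \<omega>)"
      proof -
        have "(\<Prod>i\<in>{1..n}. Y i \<omega>) = (\<Prod>i\<in>{1..r}. Y i \<omega>) * (\<Prod>i\<in>{r+1..n}. Y i \<omega>)"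
          unfolding split by (rule prod.union_disjoint) auto
        also have "(\<Prod>i\<in>{1..r}. Y i \<omega>) = (\<Prod>i=1..r. X i \<omega> ^ \<gamma> i)"
          by (rule prod.cong) (auto simp: Y_def)
        also have "(\<Prod>i\<in>{r+1..n}. Y i \<omega>) = (\<Prod>j=r+1..n. exp (- t * X j \<omega>))"
          by (rule prod.cong) (auto simp: Y_def)
        finally show ?thesis by simp
      qed
      finally have le: "L \<omega> \<le> 2 ^ p * A \<omega> + c * (\<Prod>i\<in>{1..n}. Y i \<omega>)" .
      have P0: "0 \<le> (\<Prod>i\<in>{1..n}. Y i \<omega>)" using Y0 by (simp add: prod_nonneg)
      have "ennreal (L \<omega>) \<le> ennreal (2 ^ p * A \<omega> + c * (\<Prod>i\<in>{1..n}. Y i \<omega>))"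
        using le by (rule ennreal_leI)
      also have "\<dots> = ennreal (2 ^ p * A \<omega>) + ennreal (c * (\<Prod>i\<in>{1..n}. Y i \<omega>))"
        using A0 c0 P0 by (intro ennreal_plus) auto
      also have "ennreal (2 ^ p * A \<omega>) = 2 ^ p * ennreal (A \<omega>)"
      proof -
        have "ennreal (2 ^ p) = 2 ^ p" using ennreal_power[of 2 p] by simp
        then show ?thesis using A0 by (simp add: ennreal_mult)
      qed
      also have "ennreal (c * (\<Prod>i\<in>{1..n}. Y i \<omega>)) = ennreal c * (\<Prod>i\<in>{1..n}. ennreal (Y i \<omega>))"
        using c0 P0 Y0 by (simp add: ennreal_mult prod_ennreal)
      finally show ?thesis .
    qed
    have indY: "indep_vars (\<lambda>_. borel) (\<lambda>i \<omega>. ennreal (Y i \<omega>)) {1..n}"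
    proof -
      have "indep_vars (\<lambda>_. borel) X {1..n}"
        using indep by (rule indep_vars_subset) auto
      then have "indep_vars (\<lambda>_. borel)
          (\<lambda>i \<omega>. (\<lambda>x. ennreal (if i \<le> r then x ^ \<gamma> i else exp (- t * x))) (X i \<omega>)) {1..n}"
        by (rule indep_vars_compose2) measurable
      then show ?thesis unfolding Y_def by simp
    qed
    have prodint: "(\<integral>\<^sup>+\<omega>. (\<Prod>i\<in>{1..n}. ennreal (Y i \<omega>)) \<partial>M)
        \<le> ennreal (B ^ r * exp (- (3 * t / 4)) ^ (n - r))"
    proof -
      have "(\<integral>\<^sup>+\<omega>. (\<Prod>i\<in>{1..n}. ennreal (Y i \<omega>)) \<partial>M) = (\<Prod>i\<in>{1..n}. \<integral>\<^sup>+\<omega>. ennreal (Y i \<omega>) \<partial>M)"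
        by (rule indep_vars_nn_integral) (use indY in auto)
      also have "\<dots> = (\<Prod>i\<in>{1..r}. \<integral>\<^sup>+\<omega>. ennreal (Y i \<omega>) \<partial>M) * (\<Prod>i\<in>{r+1..n}. \<integral>\<^sup>+\<omega>. ennreal (Y i \<omega>) \<partial>M)"
        unfolding split by (rule prod.union_disjoint) auto
      also have "\<dots> \<le> (\<Prod>i\<in>{1..r}. ennreal B) * (\<Prod>i\<in>{r+1..n}. ennreal (exp (- (3 * t / 4))))"
      proof (intro mult_mono prod_mono_ennreal)
        fix i assume i: "i \<in> {1..r}"
        have "\<gamma> i \<le> p" unfolding \<gamma>sum[symmetric] using i by (intro member_le_sum) auto
        have "(\<integral>\<^sup>+\<omega>. ennreal (Y i \<omega>) \<partial>M) = (\<integral>\<^sup>+\<omega>. ennreal ((\<lambda>x. x ^ \<gamma> i) (X i \<omega>)) \<partial>M)"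
          using i by (intro nn_integral_cong) (simp add: Y_def)
        also have "\<dots> = (\<integral>\<^sup>+\<omega>. ennreal ((\<lambda>x. x ^ \<gamma> i) (X 0 \<omega>)) \<partial>M)"
          by (rule samedist) measurable
        also have "\<dots> \<le> ennreal B" using mom[OF \<open>\<gamma> i \<le> p\<close>] by simp
        finally show "(\<integral>\<^sup>+\<omega>. ennreal (Y i \<omega>) \<partial>M) \<le> ennreal B" .
      next
        fix i assume i: "i \<in> {r+1..n}"
        have "(\<integral>\<^sup>+\<omega>. ennreal (Y i \<omega>) \<partial>M) = (\<integral>\<^sup>+\<omega>. ennreal ((\<lambda>x. exp (- t * x)) (X i \<omega>)) \<partial>M)"
          using i by (intro nn_integral_cong) (simp add: Y_def)
        also have "\<dots> = (\<integral>\<^sup>+\<omega>. ennreal ((\<lambda>x. exp (- t * x)) (X 0 \<omega>)) \<partial>M)"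
          by (rule samedist) measurable
        also have "\<dots> \<le> ennreal (exp (- (3 * t / 4)))" using phi by simp
        finally show "(\<integral>\<^sup>+\<omega>. ennreal (Y i \<omega>) \<partial>M) \<le> ennreal (exp (- (3 * t / 4)))" .
      qed auto
      also have "\<dots> = ennreal (B ^ r * exp (- (3 * t / 4)) ^ (n - r))"
        using B0 by (simp add: ennreal_mult ennreal_power prod_ennreal)
      finally show ?thesis .
    qed
    have "(\<integral>\<^sup>+\<omega>. ennreal (L \<omega>) \<partial>M)
        \<le> (\<integral>\<^sup>+\<omega>. (2 ^ p * ennreal (A \<omega>) + ennreal c * (\<Prod>i\<in>{1..n}. ennreal (Y i \<omega>))) \<partial>M)"
      by (intro nn_integral_mono pw)
    also have "\<dots> = 2 ^ p * (\<integral>\<^sup>+\<omega>. ennreal (A \<omega>) \<partial>M) + ennreal c * (\<integral>\<^sup>+\<omega>. (\<Prod>i\<in>{1..n}. ennreal (Y i \<omega>)) \<partial>M)"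
      by (subst nn_integral_add) (auto simp: nn_integral_cmult)
    also have "\<dots> \<le> 4 ^ p * (\<integral>\<^sup>+\<omega>. ennreal (A \<omega>) \<partial>M) + ennreal c * ennreal (B ^ r * exp (- (3 * t / 4)) ^ (n - r))"
    proof (intro add_mono mult_right_mono mult_left_mono prodint)
      show "(2::ennreal) ^ p \<le> 4 ^ p" by (rule power_mono) auto
    qed auto
    also have "ennreal c * ennreal (B ^ r * exp (- (3 * t / 4)) ^ (n - r)) = ennreal (e n)"
    proof -
      have "exp (- (3 * t / 4)) ^ (n - r) = exp (real (n - r) * (- (3 * t / 4)))"
        by (rule exp_of_nat_mult[symmetric])
      also have "\<dots> = exp (3 * t * r / 4 - (t / 4) * real n - t * real n / 2)"
      proof -
        have "real (n - r) * (- (3 * t / 4)) = 3 * t * real r / 4 - (t / 4) * real n - t * real n / 2"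
          using nr by (simp add: of_nat_diff) algebra
        then show ?thesis by simp
      qed
      finally have ex: "exp (- (3 * t / 4)) ^ (n - r) = exp (3 * t * r / 4 - (t / 4) * real n - t * real n / 2)" .
      have arg: "(3 * t * r / 4 - (t / 4) * real n - t * real n / 2) + t * real n / 2
          = 3 * t * r / 4 + (- (t / 4) * real n)" by simp
      have ex2: "exp (3 * t * r / 4 - (t / 4) * real n - t * real n / 2) * exp (t * real n / 2)
          = exp (3 * t * r / 4) * exp (- (t / 4) * real n)"
        by (simp only: mult_exp_exp arg)
      have "c * (B ^ r * exp (- (3 * t / 4)) ^ (n - r))
          = real n ^ p * B ^ r * (exp (3 * t * r / 4 - (t / 4) * real n - t * real n / 2) * exp (t * real n / 2))"
        unfolding c_def ex by (rule aux_ac1)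
      also have "\<dots> = e n" unfolding ex2 e_def by (rule aux_ac2)
      finally have "c * (B ^ r * exp (- (3 * t / 4)) ^ (n - r)) = e n" .
      then show ?thesis using c0 B0 by (simp add: ennreal_mult[symmetric])
    qed
    finally show "(\<integral>\<^sup>+ \<omega>. ennreal ((\<Prod>i=1..r. X i \<omega> ^ (2 * \<gamma> i)) /
            ((\<Sum>i=1..r. X i \<omega>) / real n + (\<Sum>i=r+1..n. X i \<omega>) / real n) ^ p) \<partial>M)
      \<le> 4 ^ p * (\<integral>\<^sup>+ \<omega>. ennreal ((\<Prod>i=1..r. X i \<omega> ^ (2 * \<gamma> i)) /
            ((\<Sum>i=1..r. X i \<omega>) / real n + 1) ^ p) \<partial>M) + ennreal (e n)"
      unfolding L_def A_def .
  qed
qed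

end
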